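(* Let $0<\lambda<1$ and $0<p<1$. Consider the functions \[ f(z)=\frac{z}{1-\frac{z}{p}+\lambda z\int_z^p\omega(t)\,dt}, \] where $\omega$ ranges over all functions analytic in $\mathbb{D}=\{z:|z|<1\}$ with $|\omega(z)|\le1$ on $\mathbb{D}$; these are exactly the functions in $\mathcal{U}_m(\lambda)$ with a simple pole at $p$. Write $f(z)=z+\sum_{k\ge2}a_kz^k$ for $|z|<p$. Then the region of variability of the coefficient $a_2$ is the closed disk \[ \left\{\frac1p-\lambda p u:\ u\in\overline{\mathbb{D}}\right\}, \] and \[ \frac1p-\lambda p\le |a_2|\le \frac1p+\lambda p. \]
   Context: For $\lambda\in(0,1)$ and $p\in(0,1)$, $\mathcal{U}_m(\lambda)$ denotes the family of functions $f$ meromorphic in $\mathbb{D}$ with a pole at $z=p$, having a Taylor expansion $f(z)=z+\sum_{k=2}^\infty a_k z^k$ for $|z|<p$, and satisfying $\left|\frac{z}{f(z)}-z\left(\frac{z}{f(z)}\right)'-1\right|<\lambda$ for every $z\in\mathbb{D}$. The integral is along any path in $\mathbb{D}$ from $z$ to $p$. *)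

theory Defs
  imports "HOL-Complex_Analysis.Complex_Analysis"
begin

text \<open>The function
  f(z) = z / (1 - z/p + lambda z \<integral>_z^p \<omega>(t) dt),
  the integral taken along the straight segment from z to p (any path in the
  unit disk gives the same value since \<omega> is holomorphic in the disk).\<close>
definition Um_fun :: "real \<Rightarrow> real \<Rightarrow> (complex \<Rightarrow> complex) \<Rightarrow> complex \<Rightarrow> complex" where
  "Um_fun lam p \<omega> z =
     z / (1 - z / complex_of_real p
          + complex_of_real lam * z * contour_integral (linepath z (complex_of_real p)) \<omega>)"

definition taylor_coeff0 :: "(complex \<Rightarrow> complex) \<Rightarrow> nat \<Rightarrow> complex" where
  "taylor_coeff0 f k = (deriv ^^ k) f 0 / fact k"

end

theory Submission
  imports Defs
begin

lemma key:
  fixes lam p :: real and \<omega> :: "complex \<Rightarrow> complex"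
  assumes hol: "\<omega> holomorphic_on ball 0 1" and p: "0 < p" "p < 1"
  shows "taylor_coeff0 (Um_fun lam p \<omega>) 2
           = 1 / p - lam * contour_integral (linepath 0 (complex_of_real p)) \<omega>"
proof -
  obtain F where F0: "\<And>x. x \<in> ball 0 1 \<Longrightarrow> (F has_field_derivative \<omega> x) (at x within ball 0 1)"
    using holomorphic_convex_primitive'[OF convex_ball open_ball hol] by blast
  have F: "(F has_field_derivative \<omega> x) (at x)" if "x \<in> ball 0 1" for x
    using F0[OF that] by (simp add: at_within_open[OF that open_ball])
  have pin: "complex_of_real p \<in> ball 0 1" using p by simp
  have I: "contour_integral (linepath z (complex_of_real p)) \<omega> = F p - F z" if z: "z \<in> ball 0 1" for z :: complex
  proof -
    have "path_image (linepath z (complex_of_real p)) \<subseteq> ball 0 1"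
      using z pin by (simp add: closed_segment_subset)
    from contour_integral_primitive[OF F0 valid_path_linepath this]
    show ?thesis by (simp add: contour_integral_unique)
  qed
  define D where "D (z::complex) = 1 - z / complex_of_real p + complex_of_real lam * z * (F p - F z)" for z
  have Ddr: "(D has_field_derivative
      (- 1 / complex_of_real p + complex_of_real lam * (F p - F z) + complex_of_real lam * z * (- \<omega> z))) (at z)"
    if "z \<in> ball 0 1" for z :: complex
    unfolding D_def using F[OF that] p
    by (auto intro!: derivative_eq_intros simp: field_simps)
  have Dhol: "D holomorphic_on ball 0 1"
    using Ddr holomorphic_on_open open_ball by blast
  have Dcont: "continuous_on (ball 0 1) D"
    using Dhol holomorphic_on_imp_continuous_on by blast
  define U where "U = ball 0 1 \<inter> D -` (- {0})"
  have Uopen: "open U" unfolding U_def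
    using continuous_open_preimage[OF Dcont open_ball, of "- {0}"] by auto
  have D0: "D 0 = 1" by (simp add: D_def)
  have U0: "0 \<in> U" unfolding U_def using D0 by simp
  define g where "g z = z / D z" for z :: complex
  have ghol: "g holomorphic_on U" unfolding g_def U_def
    by (intro holomorphic_intros holomorphic_on_subset[OF Dhol]) auto
  have DholU: "D holomorphic_on U" using Dhol holomorphic_on_subset U_def by blast
  have ev1: "eventually (\<lambda>z. Um_fun lam p \<omega> z = g z) (nhds 0)"
  proof -
    have "eventually (\<lambda>z. z \<in> ball 0 1) (nhds (0::complex))"
      by (rule eventually_nhds_in_open) auto
    then show ?thesis
      by eventually_elim (simp add: Um_fun_def g_def D_def I)
  qed
  have ev2: "eventually (\<lambda>z. g z * D z = z) (nhds 0)"
  proof -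
    have "eventually (\<lambda>z. z \<in> U) (nhds (0::complex))"
      by (rule eventually_nhds_in_open[OF Uopen U0])
    then show ?thesis
      by eventually_elim (simp add: g_def U_def)
  qed
  have m1: "(deriv ^^ 1) (\<lambda>w. g w * D w) 0 = 1"
    using higher_deriv_cong_ev[OF ev2 refl, of 1] by simp
  have m2: "(deriv ^^ 2) (\<lambda>w. g w * D w) 0 = 0"
    using higher_deriv_cong_ev[OF ev2 refl, of 2] by simp
  have g0: "g 0 = 0" by (simp add: g_def)
  have dD: "deriv D 0 = - 1 / complex_of_real p + complex_of_real lam * contour_integral (linepath 0 (complex_of_real p)) \<omega>"
    using DERIV_imp_deriv[OF Ddr[of 0]] I[of 0] by simp
  have e1: "deriv g 0 = 1"
    using m1 higher_deriv_mult[OF ghol DholU Uopen U0, of 1] g0 D0 by simp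
  have e2: "(deriv ^^ 2) g 0 + 2 * deriv g 0 * deriv D 0 = 0"
    using m2 higher_deriv_mult[OF ghol DholU Uopen U0, of 2] g0 D0
    by (simp add: numeral_2_eq_2 atLeast0_atMost_Suc)
  have "taylor_coeff0 (Um_fun lam p \<omega>) 2 = (deriv ^^ 2) g 0 / 2"
    unfolding taylor_coeff0_def using higher_deriv_cong_ev[OF ev1 refl, of 2] by simp
  also have "\<dots> = - deriv D 0" proof -
    have "(deriv ^^ 2) g 0 = - 2 * deriv D 0" using e1 e2 by (simp add: eq_neg_iff_add_eq_0 algebra_simps)
    then show ?thesis by simp
  qed
  finally show ?thesis using dD by simp
qed


lemma int_bound:
  fixes p :: real and \<omega> :: "complex \<Rightarrow> complex"
  assumes hol: "\<omega> holomorphic_on ball 0 1" and bd: "\<forall>z\<in>ball 0 1. norm (\<omega> z) \<le> 1"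
    and p: "0 < p" "p < 1"
  shows "norm (contour_integral (linepath 0 (complex_of_real p)) \<omega>) \<le> p"
proof -
  have pin: "complex_of_real p \<in> ball 0 1" using p by simp
  have seg: "closed_segment 0 (complex_of_real p) \<subseteq> ball 0 1"
    using pin by (simp add: closed_segment_subset)
  have "\<omega> contour_integrable_on linepath 0 (complex_of_real p)"
    using contour_integrable_holomorphic_simple[OF hol open_ball valid_path_linepath] seg by simp
  from contour_integral_bound_linepath[OF this, of 1] seg bd p
  show ?thesis by auto
qed

theorem corollary1:
  fixes lam p :: real
  assumes "0 < lam" "lam < 1" "0 < p" "p < 1"
  shows "{taylor_coeff0 (Um_fun lam p \<omega>) 2 | \<omega>.
            \<omega> holomorphic_on ball 0 1 \<and> (\<forall>z\<in>ball 0 1. norm (\<omega> z) \<le> 1)}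
         = {complex_of_real (1 / p) - complex_of_real (lam * p) * u | u. norm u \<le> 1}
       \<and> (\<forall>\<omega>. \<omega> holomorphic_on ball 0 1 \<and> (\<forall>z\<in>ball 0 1. norm (\<omega> z) \<le> 1) \<longrightarrow>
            1 / p - lam * p \<le> norm (taylor_coeff0 (Um_fun lam p \<omega>) 2)
          \<and> norm (taylor_coeff0 (Um_fun lam p \<omega>) 2) \<le> 1 / p + lam * p)"
proof -
  have rep: "\<exists>u. norm u \<le> 1 \<and> taylor_coeff0 (Um_fun lam p \<omega>) 2
               = complex_of_real (1 / p) - complex_of_real (lam * p) * u"
    if hol: "\<omega> holomorphic_on ball 0 1" and bd: "\<forall>z\<in>ball 0 1. norm (\<omega> z) \<le> 1" for \<omega>
  proof -
    define J where "J = contour_integral (linepath 0 (complex_of_real p)) \<omega>"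
    have nJ: "norm J \<le> p" unfolding J_def using int_bound[OF hol bd assms(3,4)] .
    show ?thesis
    proof (intro exI conjI)
      show "norm (J / complex_of_real p) \<le> 1"
        using nJ assms by (simp add: norm_divide field_simps)
      show "taylor_coeff0 (Um_fun lam p \<omega>) 2
          = complex_of_real (1 / p) - complex_of_real (lam * p) * (J / complex_of_real p)"
        using key[OF hol assms(3,4), of lam] assms unfolding J_def by simp
    qed
  qed
  have S1: "{taylor_coeff0 (Um_fun lam p \<omega>) 2 | \<omega>.
            \<omega> holomorphic_on ball 0 1 \<and> (\<forall>z\<in>ball 0 1. norm (\<omega> z) \<le> 1)}
         = {complex_of_real (1 / p) - complex_of_real (lam * p) * u | u. norm u \<le> 1}"
  proof (intro equalityI subsetI)
    fix x assume "x \<in> {taylor_coeff0 (Um_fun lam p \<omega>) 2 | \<omega>.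
            \<omega> holomorphic_on ball 0 1 \<and> (\<forall>z\<in>ball 0 1. norm (\<omega> z) \<le> 1)}"
    then show "x \<in> {complex_of_real (1 / p) - complex_of_real (lam * p) * u | u. norm u \<le> 1}"
      using rep by blast
  next
    fix x assume "x \<in> {complex_of_real (1 / p) - complex_of_real (lam * p) * u | u. norm u \<le> 1}"
    then obtain u where u: "norm u \<le> 1" "x = complex_of_real (1 / p) - complex_of_real (lam * p) * u"
      by blast
    have hol: "(\<lambda>_. u) holomorphic_on ball 0 1" by simp
    have "taylor_coeff0 (Um_fun lam p (\<lambda>_. u)) 2 = x"
      using key[OF hol assms(3,4), of lam] u by simp
    then show "x \<in> {taylor_coeff0 (Um_fun lam p \<omega>) 2 | \<omega>.
            \<omega> holomorphic_on ball 0 1 \<and> (\<forall>z\<in>ball 0 1. norm (\<omega> z) \<le> 1)}"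
      using hol u(1) by blast
  qed
  have S2: "1 / p - lam * p \<le> norm (taylor_coeff0 (Um_fun lam p \<omega>) 2)
          \<and> norm (taylor_coeff0 (Um_fun lam p \<omega>) 2) \<le> 1 / p + lam * p"
    if hyp: "\<omega> holomorphic_on ball 0 1 \<and> (\<forall>z\<in>ball 0 1. norm (\<omega> z) \<le> 1)" for \<omega>
  proof -
    obtain u where u: "norm u \<le> 1" and eq: "taylor_coeff0 (Um_fun lam p \<omega>) 2
               = complex_of_real (1 / p) - complex_of_real (lam * p) * u"
      using rep hyp by blast
    have lp: "norm (complex_of_real (lam * p) * u) \<le> lam * p"
      using u assms by (simp add: norm_mult abs_of_pos mult_left_le)
    have n1: "norm (complex_of_real (1 / p)) = 1 / p" using assms by (simp only: norm_of_real) simp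
    have "norm (complex_of_real (1 / p)) - norm (complex_of_real (lam * p) * u)
          \<le> norm (complex_of_real (1 / p) - complex_of_real (lam * p) * u)"
      by (rule norm_triangle_ineq2)
    moreover have "norm (complex_of_real (1 / p) - complex_of_real (lam * p) * u)
          \<le> norm (complex_of_real (1 / p)) + norm (complex_of_real (lam * p) * u)"
      by (rule norm_triangle_ineq4)
    ultimately show ?thesis unfolding eq using lp n1 by linarith
  qed
  show ?thesis using S1 S2 by blast
qed

end
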